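(* Let $f:\mathbb{X}\to\mathbb{R}$ be a finite measurable function. If $\sup_{n\ge0}\big|\sum_{i=-n}^{n}f\circ T^i\big|<+\infty$ $\mu$-a.e. on a set of positive measure, then there exists a bounded measurable function $g:\mathbb{X}\to\mathbb{R}$ such that $f=g-g\circ T$ $\mu$-a.e.
   Context: Standing assumptions: $(\mathbb{X},\mathcal{X},\mu,T)$ is a probability space with $T$ an invertible, bi-measurable, measure-preserving, ergodic transformation. *)

theory Defs
  imports "HOL-Probability.Probability"
begin

definition invertible_bimeasurable :: "'a measure \<Rightarrow> ('a \<Rightarrow> 'a) \<Rightarrow> bool" where
  "invertible_bimeasurable M T \<longleftrightarrow>
     bij_betw T (space M) (space M) \<and> T \<in> measurable M M \<and>
     the_inv_into (space M) T \<in> measurable M M"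

definition measure_preserving :: "'a measure \<Rightarrow> ('a \<Rightarrow> 'a) \<Rightarrow> bool" where
  "measure_preserving M T \<longleftrightarrow>
     T \<in> measurable M M \<and> (\<forall>A\<in>sets M. emeasure M (T -` A \<inter> space M) = emeasure M A)"

definition ergodic :: "'a measure \<Rightarrow> ('a \<Rightarrow> 'a) \<Rightarrow> bool" where
  "ergodic M T \<longleftrightarrow>
     (\<forall>A\<in>sets M. T -` A \<inter> space M = A \<longrightarrow> emeasure M A = 0 \<or> emeasure M A = emeasure M (space M))"

definition Tpow :: "'a measure \<Rightarrow> ('a \<Rightarrow> 'a) \<Rightarrow> int \<Rightarrow> 'a \<Rightarrow> 'a" where
  "Tpow M T i = (if 0 \<le> i then T ^^ nat i else (the_inv_into (space M) T) ^^ nat (- i))"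

end

theory Submission
  imports Defs
begin

lemma funpow_in: "(\<And>x. x \<in> A \<Longrightarrow> g x \<in> A) \<Longrightarrow> x \<in> A \<Longrightarrow> (g ^^ n) x \<in> A"
  by (induction n) auto

lemma funpow_measurable: "g \<in> measurable M M \<Longrightarrow> (g ^^ n) \<in> measurable M M"
proof (induction n)
  case 0 then show ?case by simp
next
  case (Suc n) then show ?case by (simp add: measurable_comp)
qed

lemma funpow_mp:
  assumes g: "g \<in> measurable M M" and p: "\<And>A. A \<in> sets M \<Longrightarrow> emeasure M (g -` A \<inter> space M) = emeasure M A"
  shows "A \<in> sets M \<Longrightarrow> emeasure M ((g ^^ n) -` A \<inter> space M) = emeasure M A"
proof (induction n arbitrary: A)
  case 0 then show ?case using sets.sets_into_space by (simp add: Int_absorb2)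
next
  case (Suc n)
  have gi: "\<And>x. x \<in> space M \<Longrightarrow> g x \<in> space M" using g by (meson measurable_space)
  have eq: "(g ^^ Suc n) -` A \<inter> space M = g -` ((g ^^ n) -` A \<inter> space M) \<inter> space M"
    using gi by (auto simp: funpow_swap1)
  have m: "(g ^^ n) -` A \<inter> space M \<in> sets M"
    using funpow_measurable[OF g] Suc.prems by (meson measurable_sets)
  have "emeasure M ((g ^^ Suc n) -` A \<inter> space M) = emeasure M (g -` ((g ^^ n) -` A \<inter> space M) \<inter> space M)"
    by (simp only: eq)
  also have "\<dots> = emeasure M ((g ^^ n) -` A \<inter> space M)" by (rule p[OF m])
  also have "\<dots> = emeasure M A" by (rule Suc.IH[OF Suc.prems])
  finally show ?case .
qed

locale erg = prob_space M for M :: "'a measure" +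
  fixes T :: "'a \<Rightarrow> 'a"
  assumes invb: "invertible_bimeasurable M T" and mpT: "measure_preserving M T" and ergT: "ergodic M T"
begin

abbreviation "S \<equiv> the_inv_into (space M) T"
abbreviation "TP \<equiv> Tpow M T"

lemma bij: "bij_betw T (space M) (space M)" using invb by (simp add: invertible_bimeasurable_def)
lemma T_meas: "T \<in> measurable M M" using invb by (simp add: invertible_bimeasurable_def)
lemma S_meas: "S \<in> measurable M M" using invb by (simp add: invertible_bimeasurable_def)
lemma T_in: "x \<in> space M \<Longrightarrow> T x \<in> space M" using bij by (meson bij_betwE)
lemma S_in: "x \<in> space M \<Longrightarrow> S x \<in> space M"
  using bij by (metis bij_betw_def the_inv_into_into subset_refl)
lemma T_S: "x \<in> space M \<Longrightarrow> T (S x) = x"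
  using bij by (metis bij_betw_def f_the_inv_into_f)
lemma S_T: "x \<in> space M \<Longrightarrow> S (T x) = x"
  using bij by (metis bij_betw_def the_inv_into_f_f)

lemma TP_in: "x \<in> space M \<Longrightarrow> TP i x \<in> space M"
  unfolding Tpow_def using funpow_in[of "space M" T] funpow_in[of "space M" S] T_in S_in by auto

lemma TP_0[simp]: "TP 0 x = x" by (simp add: Tpow_def)

lemma TP_succ: assumes x: "x \<in> space M" shows "TP (i+1) x = T (TP i x)"
proof (cases "0 \<le> i")
  case True
  then have "nat (i+1) = Suc (nat i)" by simp
  then show ?thesis using True by (simp add: Tpow_def)
next
  case False
  define m where "m = nat (-(i+1))"
  have e: "nat (-i) = Suc m" using False by (simp add: m_def)
  have "TP i x = S ((S ^^ m) x)" using False e by (simp add: Tpow_def)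
  moreover have "(S ^^ m) x \<in> space M" using funpow_in[of "space M" S] S_in x by auto
  moreover have "TP (i+1) x = (S ^^ m) x" using False by (simp add: Tpow_def m_def)
  ultimately show ?thesis using T_S by simp
qed

lemma TP_pred: assumes x: "x \<in> space M" shows "TP (i - 1) x = S (TP i x)"
  using TP_succ[OF x, of "i - 1"] S_T TP_in[OF x] by simp

lemma TP_add: assumes x: "x \<in> space M" shows "TP (i + j) x = TP i (TP j x)"
proof (induction i rule: int_induct[where k=0])
  case base then show ?case by simp
next
  case (step1 i)
  have "TP (i + 1 + j) x = TP ((i + j) + 1) x" by (simp add: algebra_simps)
  also have "\<dots> = T (TP (i+j) x)" by (rule TP_succ[OF x])
  also have "\<dots> = TP (i+1) (TP j x)" using step1 TP_succ TP_in[OF x] by simp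
  finally show ?case .
next
  case (step2 i)
  have "TP (i - 1 + j) x = TP ((i + j) - 1) x" by (simp add: algebra_simps)
  also have "\<dots> = S (TP (i+j) x)" by (rule TP_pred[OF x])
  also have "\<dots> = TP (i - 1) (TP j x)" using step2 TP_pred TP_in[OF x] by simp
  finally show ?case .
qed

lemma TP_meas: "TP i \<in> measurable M M"
proof -
  have "(\<lambda>x. (T ^^ nat i) x) \<in> measurable M M" "(\<lambda>x. (S ^^ nat (-i)) x) \<in> measurable M M"
    using funpow_measurable T_meas S_meas by auto
  then show ?thesis unfolding Tpow_def by (cases "0 \<le> i") auto
qed

lemma T_mp: "A \<in> sets M \<Longrightarrow> emeasure M (T -` A \<inter> space M) = emeasure M A"
  using mpT by (simp add: measure_preserving_def)

lemma S_mp: assumes A: "A \<in> sets M" shows "emeasure M (S -` A \<inter> space M) = emeasure M A"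
proof -
  have m: "S -` A \<inter> space M \<in> sets M" using S_meas A by (meson measurable_sets)
  have "T -` (S -` A \<inter> space M) \<inter> space M = A"
    using S_T T_in sets.sets_into_space[OF A] by auto
  then show ?thesis using T_mp[OF m] by simp
qed

lemma TP_mp: assumes A: "A \<in> sets M" shows "emeasure M (TP i -` A \<inter> space M) = emeasure M A"
  unfolding Tpow_def using funpow_mp[OF T_meas T_mp A] funpow_mp[OF S_meas S_mp A]
  by (cases "0 \<le> i") auto

end


lemma rec_unique:
  fixes u v d :: "int \<Rightarrow> real"
  assumes "\<And>t. u (t+1) = u t + d t" "\<And>t. v (t+1) = v t + d t" "u 0 = v 0"
  shows "u t = v t"
proof (induction t rule: int_induct[where k=0])
  case base then show ?case using assms by simp
next
  case (step1 i) then show ?case using assms by simp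
next
  case (step2 i) then show ?case using assms(1)[of "i-1"] assms(2)[of "i-1"] by simp
qed

locale ergf = erg +
  fixes f :: "'a \<Rightarrow> real"
  assumes f_meas: "f \<in> borel_measurable M"
begin

definition P :: "'a \<Rightarrow> int \<Rightarrow> real" where
  "P x t = (\<Sum>i\<in>{0..<t}. f (TP i x)) - (\<Sum>i\<in>{t..<0}. f (TP i x))"

lemma P_0[simp]: "P x 0 = 0" by (simp add: P_def)

lemma P_succ: "P x (t+1) = P x t + f (TP t x)"
proof (cases "0 \<le> t")
  case True
  then have "{0..<t+1} = insert t {0..<t}" by auto
  then show ?thesis using True by (simp add: P_def)
next
  case False
  then have "{t..<0} = insert t {t+1..<0}" by auto
  then show ?thesis using False by (simp add: P_def)
qed

lemma P_1: "P x 1 = f x" using P_succ[of x 0] by simp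

lemma P_sum: assumes "a \<le> b + 1" shows "(\<Sum>i\<in>{a..b}. f (TP i x)) = P x (b+1) - P x a"
proof -
  have "b \<ge> a - 1" using assms by simp
  then show ?thesis
  proof (induction b rule: int_ge_induct)
    case base then show ?case by simp
  next
    case (step i)
    then have "{a..i+1} = insert (i+1) {a..i}" by auto
    then show ?case using step P_succ[of x "i+1"] by simp
  qed
qed

lemma P_shift: assumes x: "x \<in> space M" shows "P (TP k x) t = P x (t+k) - P x k"
proof (rule rec_unique[where d="\<lambda>t. f (TP (t+k) x)" and u="\<lambda>t. P (TP k x) t" and v="\<lambda>t. P x (t+k) - P x k"])
  fix t
  show "P (TP k x) (t + 1) = P (TP k x) t + f (TP (t + k) x)"
    using P_succ TP_add[OF x] by simp
  show "P x (t + 1 + k) - P x k = P x (t + k) - P x k + f (TP (t + k) x)"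
    using P_succ[of x "t+k"] by (simp add: algebra_simps)
qed simp

lemma fTP_meas[measurable]: "(\<lambda>x. f (TP i x)) \<in> borel_measurable M"
  using measurable_compose[OF TP_meas f_meas] by simp

lemma P_meas[measurable]: "(\<lambda>x. P x t) \<in> borel_measurable M"
  unfolding P_def by measurable

definition bnd :: "real \<Rightarrow> 'a \<Rightarrow> bool" where
  "bnd K y \<longleftrightarrow> (\<forall>n::nat. \<bar>\<Sum>i\<in>{- int n..int n}. f (TP i y)\<bar> \<le> K)"

lemma refl: assumes x: "x \<in> space M" and b: "bnd K (TP k x)"
  shows "\<bar>P x (2*k+1-s) - P x s\<bar> \<le> K"
proof -
  have key: "\<bar>P x (k + int n + 1) - P x (k - int n)\<bar> \<le> K" for n
  proof -
    have "(\<Sum>i\<in>{- int n..int n}. f (TP i (TP k x))) = P (TP k x) (int n+1) - P (TP k x) (- int n)"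
      by (rule P_sum) simp
    also have "\<dots> = P x (k + int n + 1) - P x (k - int n)"
      using P_shift[OF x, of k "int n + 1"] P_shift[OF x, of k "- int n"] by (simp add: algebra_simps)
    finally show ?thesis using b unfolding bnd_def by metis
  qed
  show ?thesis
  proof (cases "s \<le> k")
    case True
    then show ?thesis using key[of "nat (k - s)"] by (simp add: algebra_simps)
  next
    case False
    then show ?thesis using key[of "nat (s - k - 1)"] by (simp add: algebra_simps abs_minus_commute)
  qed
qed

lemma transl: assumes x: "x \<in> space M" and b: "bnd K (TP k x)" "bnd K (TP l x)"
  shows "\<bar>P x (s + 2*(k-l)) - P x s\<bar> \<le> 2*K"
proof -
  have 1: "\<bar>P x (2*l+1-s) - P x s\<bar> \<le> K" by (rule refl[OF x b(2)])
  have 2: "\<bar>P x (2*k+1-(2*l+1-s)) - P x (2*l+1-s)\<bar> \<le> K" by (rule refl[OF x b(1)])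
  have "P x (s + 2*(k-l)) = P x (2*k+1-(2*l+1-s))" by (simp add: algebra_simps)
  then show ?thesis using 1 2 by (simp add: abs_le_iff)
qed

lemma P_bounded:
  assumes x: "x \<in> space M" and F: "finite F"
    and h: "\<And>t. \<exists>a\<in>F. \<exists>k. bnd K (TP (k+t) x) \<and> bnd K (TP (k+a) x)"
  shows "\<exists>C. \<forall>u. \<bar>P x u\<bar> \<le> C"
proof (intro exI allI)
  fix u :: int
  define t where "t = u div 2"
  define r where "r = u mod 2"
  have u: "u = 2*t + r" by (simp add: t_def r_def)
  obtain a k where a: "a \<in> F" and k: "bnd K (TP (k+t) x)" "bnd K (TP (k+a) x)" using h by blast
  have "\<bar>P x ((2*a+r) + 2*((k+t)-(k+a))) - P x (2*a+r)\<bar> \<le> 2*K" by (rule transl[OF x k])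
  moreover have "(2*a+r) + 2*((k+t)-(k+a)) = u" using u by simp
  ultimately have 1: "\<bar>P x u\<bar> \<le> 2*K + \<bar>P x (2*a+r)\<bar>" by simp
  have r: "r = 0 \<or> r = 1" unfolding r_def by auto
  have "\<bar>P x (2*a+r)\<bar> \<le> \<bar>P x (2*a)\<bar> + \<bar>P x (2*a+1)\<bar>" using r by auto
  also have "\<dots> \<le> (\<Sum>b\<in>F. \<bar>P x (2*b)\<bar> + \<bar>P x (2*b+1)\<bar>)"
    by (rule member_le_sum[OF a _ F]) simp
  finally show "\<bar>P x u\<bar> \<le> 2*K + (\<Sum>b\<in>F. \<bar>P x (2*b)\<bar> + \<bar>P x (2*b+1)\<bar>)" using 1 by simp
qed

end


context erg
begin

lemma inv_full:
  assumes C: "C \<in> sets M" and inv: "T -` C \<inter> space M = C" and pos: "emeasure M C > 0"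
  shows "AE x in M. x \<in> C"
proof -
  have "emeasure M C = 0 \<or> emeasure M C = emeasure M (space M)"
    using ergT C inv unfolding ergodic_def by blast
  then have "emeasure M C = 1" using pos emeasure_space_1 by auto
  then have "prob C = 1" using emeasure_eq_measure by simp
  then show ?thesis by (rule AE_prob_1)
qed

lemma TP_meas'[measurable]: "TP i \<in> measurable M M" by (rule TP_meas)

definition D :: "'a set \<Rightarrow> int \<Rightarrow> int \<Rightarrow> 'a set" where
  "D B a b = {x\<in>space M. TP a x \<in> B \<and> TP b x \<in> B}"

lemma D_sets: assumes [measurable]: "B \<in> sets M" shows "D B a b \<in> sets M"
  unfolding D_def by measurable

lemma pairs_AE:
  assumes B[measurable]: "B \<in> sets M"
  shows "AE x in M. \<forall>a b. emeasure M (D B a b) > 0 \<longrightarrow> (\<exists>k. TP (k+a) x \<in> B \<and> TP (k+b) x \<in> B)"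
proof -
  have "AE x in M. emeasure M (D B a b) > 0 \<longrightarrow> (\<exists>k. TP (k+a) x \<in> B \<and> TP (k+b) x \<in> B)" for a b
  proof (cases "emeasure M (D B a b) > 0")
    case True
    define C where "C = {x\<in>space M. \<exists>k. TP (k+a) x \<in> B \<and> TP (k+b) x \<in> B}"
    have Cs: "C \<in> sets M" unfolding C_def by measurable
    have inv: "T -` C \<inter> space M = C"
    proof (intro set_eqI iffI)
      fix x assume "x \<in> T -` C \<inter> space M"
      then obtain k where x: "x \<in> space M" "TP (k+a) (T x) \<in> B" "TP (k+b) (T x) \<in> B"
        unfolding C_def by auto
      have "TP (k+a) (T x) = TP (k+1+a) x" "TP (k+b) (T x) = TP (k+1+b) x"
        using TP_add[OF x(1), of "k+a" 1] TP_add[OF x(1), of "k+b" 1] TP_succ[OF x(1), of 0]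
        by (simp_all add: algebra_simps)
      then show "x \<in> C" using x unfolding C_def by auto
    next
      fix x assume "x \<in> C"
      then obtain k where x: "x \<in> space M" "TP (k+a) x \<in> B" "TP (k+b) x \<in> B"
        unfolding C_def by auto
      have "TP ((k-1)+a) (T x) = TP (k+a) x" "TP ((k-1)+b) (T x) = TP (k+b) x"
        using TP_add[OF x(1), of "k-1+a" 1] TP_add[OF x(1), of "k-1+b" 1] TP_succ[OF x(1), of 0]
        by (simp_all add: algebra_simps)
      then have "TP ((k-1)+a) (T x) \<in> B \<and> TP ((k-1)+b) (T x) \<in> B" using x by simp
      then have "T x \<in> C" unfolding C_def using T_in[OF x(1)] by blast
      then show "x \<in> T -` C \<inter> space M" using x(1) by simp
    qed
    have "D B a b \<subseteq> C" unfolding D_def C_def by (auto intro: exI[of _ 0])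
    then have "emeasure M (D B a b) \<le> emeasure M C" by (rule emeasure_mono) (rule Cs)
    then have "emeasure M C > 0" using True by simp
    then have "AE x in M. x \<in> C" using inv_full Cs inv by blast
    then show ?thesis by (rule AE_mp) (auto simp: C_def)
  qed simp
  then show ?thesis by (simp add: AE_all_countable)
qed

end


context erg
begin

definition disj :: "'a set \<Rightarrow> int set \<Rightarrow> bool" where
  "disj B F \<longleftrightarrow> (\<forall>a\<in>F. \<forall>b\<in>F. a \<noteq> b \<longrightarrow> emeasure M (D B a b) = 0)"

lemma D_sym: "D B a b = D B b a" unfolding D_def by auto

lemma card_bound:
  assumes B[measurable]: "B \<in> sets M" and F: "finite F" and dj: "disj B F"
  shows "of_nat (card F) * emeasure M B \<le> 1"
proof -
  define E where "E a = TP a -` B \<inter> space M" for a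
  have Es[measurable]: "E a \<in> sets M" for a unfolding E_def by measurable
  have Em: "emeasure M (E a) = emeasure M B" for a unfolding E_def by (rule TP_mp[OF B])
  have "AE x in M. x \<notin> D B a b" if "a \<in> F" "b \<in> F" "a \<noteq> b" for a b
    using dj that D_sets[OF B] unfolding disj_def by (intro AE_not_in) (auto intro: null_setsI)
  then have ae: "AE x in M. \<forall>a\<in>F. \<forall>b\<in>F. a \<noteq> b \<longrightarrow> x \<notin> D B a b"
    using F by (simp add: AE_ball_countable countable_finite)
  have le1: "AE x in M. (\<Sum>a\<in>F. indicator (E a) x) \<le> (1::ennreal)"
    using ae
  proof (rule AE_mp, intro AE_I2 impI)
    fix x assume x: "x \<in> space M" and h: "\<forall>a\<in>F. \<forall>b\<in>F. a \<noteq> b \<longrightarrow> x \<notin> D B a b"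
    show "(\<Sum>a\<in>F. indicator (E a) x) \<le> (1::ennreal)"
    proof (cases "\<exists>a\<in>F. x \<in> E a")
      case False
      then have "(\<Sum>a\<in>F. indicator (E a) x) = (0::ennreal)" by (auto intro: sum.neutral)
      then show ?thesis by simp
    next
      case True
      then obtain a0 where a0: "a0 \<in> F" "x \<in> E a0" by blast
      have "(\<Sum>a\<in>F - {a0}. indicator (E a) x) = (0::ennreal)"
      proof (rule sum.neutral, intro ballI)
        fix a assume a: "a \<in> F - {a0}"
        have "x \<notin> E a"
        proof
          assume "x \<in> E a"
          then have "x \<in> D B a a0" using a0 x unfolding D_def E_def by auto
          then show False using h a a0 by auto
        qed
        then show "indicator (E a) x = (0::ennreal)" by simp
      qed
      then have "(\<Sum>a\<in>F. indicator (E a) x) = (indicator (E a0) x :: ennreal)"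
        using sum.remove[OF F a0(1), of "\<lambda>a. indicator (E a) x :: ennreal"] by simp
      then show ?thesis by (simp add: indicator_def)
    qed
  qed
  have "(\<integral>\<^sup>+x. (\<Sum>a\<in>F. indicator (E a) x) \<partial>M) = (\<Sum>a\<in>F. emeasure M (E a))"
    by (subst nn_integral_sum) auto
  also have "\<dots> = of_nat (card F) * emeasure M B" using Em by simp
  finally have eq: "(\<integral>\<^sup>+x. (\<Sum>a\<in>F. indicator (E a) x) \<partial>M) = of_nat (card F) * emeasure M B" .
  have "(\<integral>\<^sup>+x. (\<Sum>a\<in>F. indicator (E a) x) \<partial>M) \<le> (\<integral>\<^sup>+x. 1 \<partial>M)"
    by (rule nn_integral_mono_AE[OF le1])
  also have "\<dots> = 1" using emeasure_space_1 by simp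
  finally show ?thesis using eq by simp
qed

lemma max_F:
  assumes B[measurable]: "B \<in> sets M" and pos: "emeasure M B > 0"
  shows "\<exists>F. finite F \<and> (\<forall>t. \<exists>a\<in>F. emeasure M (D B t a) > 0)"
proof -
  define m where "m = measure M B"
  have Bm: "emeasure M B = ennreal m" unfolding m_def by (simp add: emeasure_eq_measure)
  have m0: "m > 0" using pos Bm by (simp add: ennreal_less_zero_iff m_def)
  define N where "N = nat \<lceil>1/m\<rceil>"
  have cb: "card F \<le> N" if "finite F" "disj B F" for F
  proof -
    have e: "of_nat (card F) * emeasure M B = ennreal (real (card F) * m)"
      by (simp only: Bm ennreal_mult'[of "real (card F)" m, OF of_nat_0_le_iff] ennreal_of_nat_eq_real_of_nat)
    have "ennreal (real (card F) * m) \<le> 1"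
      using card_bound[OF B that] by (simp only: e)
    then have "real (card F) * m \<le> 1" by (simp add: ennreal_le_1)
    then have "real (card F) \<le> 1/m" using m0 by (simp add: field_simps)
    then show ?thesis unfolding N_def by linarith
  qed
  define SS where "SS = {n. \<exists>F. finite F \<and> disj B F \<and> card F = n}"
  have "SS \<subseteq> {..N}" using cb unfolding SS_def by auto
  then have fin: "finite SS" by (rule finite_subset) simp
  have "finite {} \<and> disj B {} \<and> card {} = (0::nat)" unfolding disj_def by simp
  then have "0 \<in> SS" unfolding SS_def by blast
  then have ne: "SS \<noteq> {}" by blast
  have "Max SS \<in> SS" by (rule Max_in[OF fin ne])
  then have "\<exists>F. finite F \<and> disj B F \<and> card F = Max SS" unfolding SS_def by simp
  then obtain F0 where F0: "finite F0" "disj B F0" "card F0 = Max SS" by blast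
  have "\<exists>a\<in>F0. emeasure M (D B t a) > 0" for t
  proof (cases "t \<in> F0")
    case True
    have "D B t t = TP t -` B \<inter> space M" unfolding D_def by auto
    then have "emeasure M (D B t t) = emeasure M B" using TP_mp[OF B] by simp
    then show ?thesis using True pos by (intro bexI[of _ t]) simp_all
  next
    case False
    have "\<not> disj B (insert t F0)"
    proof
      assume "disj B (insert t F0)"
      then have "card (insert t F0) \<in> SS" unfolding SS_def using F0 by blast
      then have "card (insert t F0) \<le> Max SS" using fin by simp
      then show False using F0 False by simp
    qed
    then obtain a b where ab: "a \<in> insert t F0" "b \<in> insert t F0" "a \<noteq> b" "emeasure M (D B a b) \<noteq> 0"
      unfolding disj_def by blast
    then have "(a = t \<and> b \<in> F0) \<or> (b = t \<and> a \<in> F0)" using F0(2) unfolding disj_def by auto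
    then show ?thesis
    proof
      assume h: "a = t \<and> b \<in> F0"
      then have "emeasure M (D B t b) \<noteq> 0" using ab(4) by simp
      then have "emeasure M (D B t b) > 0" by (rule zero_less_iff_neq_zero[THEN iffD2])
      then show ?thesis using h by blast
    next
      assume h: "b = t \<and> a \<in> F0"
      then have "emeasure M (D B t a) \<noteq> 0" using ab(4) D_sym[of B t a] by simp
      then have "emeasure M (D B t a) > 0" by (rule zero_less_iff_neq_zero[THEN iffD2])
      then show ?thesis using h by blast
    qed
  qed
  then show ?thesis using F0(1) by blast
qed

end


context ergf
begin

lemma BK_sets[measurable]: assumes [measurable]: "A \<in> sets M"
  shows "{x\<in>space M. x \<in> A \<and> bnd K x} \<in> sets M"
  unfolding bnd_def by measurable

lemma exists_K:
  assumes A[measurable]: "A \<in> sets M" and pos: "emeasure M A > 0"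
    and ae: "AE x in M. x \<in> A \<longrightarrow> bdd_above (range (\<lambda>n::nat. \<bar>\<Sum>i\<in>{- int n..int n}. f (TP i x)\<bar>))"
  shows "\<exists>K::nat. emeasure M {x\<in>space M. x \<in> A \<and> bnd (real K) x} > 0"
proof (rule ccontr)
  assume "\<not> ?thesis"
  then have z: "emeasure M {x\<in>space M. x \<in> A \<and> bnd (real K) x} = 0" for K :: nat
    by (simp add: zero_less_iff_neq_zero)
  have "AE x in M. x \<notin> {x\<in>space M. x \<in> A \<and> bnd (real K) x}" for K :: nat
    by (rule AE_not_in) (rule null_setsI[OF z BK_sets[OF A]])
  then have "AE x in M. \<forall>K::nat. x \<notin> {x\<in>space M. x \<in> A \<and> bnd (real K) x}"
    by (subst AE_all_countable) blast
  with ae have "AE x in M. x \<notin> A"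
  proof (rule AE_mp[OF _ AE_mp], intro AE_I2 impI)
    fix x assume x: "x \<in> space M" and h: "\<forall>K::nat. x \<notin> {x\<in>space M. x \<in> A \<and> bnd (real K) x}"
      and hb: "x \<in> A \<longrightarrow> bdd_above (range (\<lambda>n::nat. \<bar>\<Sum>i\<in>{- int n..int n}. f (TP i x)\<bar>))"
    show "x \<notin> A"
    proof
      assume xA: "x \<in> A"
      then obtain C where C: "\<And>n::nat. \<bar>\<Sum>i\<in>{- int n..int n}. f (TP i x)\<bar> \<le> C"
        using hb unfolding bdd_above_def by blast
      have "bnd (real (nat \<lceil>C\<rceil>)) x" unfolding bnd_def
      proof
        fix n :: nat
        have "C \<le> real (nat \<lceil>C\<rceil>)" by linarith
        then show "\<bar>\<Sum>i\<in>{- int n..int n}. f (TP i x)\<bar> \<le> real (nat \<lceil>C\<rceil>)" using C[of n] by linarith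
      qed
      then show False using h x xA by blast
    qed
  qed
  then have "emeasure M A = 0"
    using AE_iff_measurable[OF A, of "\<lambda>x. x \<notin> A"] sets.sets_into_space[OF A] by auto
  then show False using pos by simp
qed

lemma P_bounded_AE:
  assumes A[measurable]: "A \<in> sets M" and pos: "emeasure M A > 0"
    and ae: "AE x in M. x \<in> A \<longrightarrow> bdd_above (range (\<lambda>n::nat. \<bar>\<Sum>i\<in>{- int n..int n}. f (TP i x)\<bar>))"
  shows "AE x in M. \<exists>C. \<forall>u. \<bar>P x u\<bar> \<le> C"
proof -
  obtain K :: nat where K: "emeasure M {x\<in>space M. x \<in> A \<and> bnd (real K) x} > 0"
    using exists_K[OF A pos ae] by blast
  define B where "B = {x\<in>space M. x \<in> A \<and> bnd (real K) x}"
  have Bs[measurable]: "B \<in> sets M" unfolding B_def by (rule BK_sets[OF A])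
  have Bpos: "emeasure M B > 0" using K B_def by simp
  obtain F where F: "finite F" "\<And>t. \<exists>a\<in>F. emeasure M (D B t a) > 0"
    using max_F[OF Bs Bpos] by blast
  show ?thesis using pairs_AE[OF Bs]
  proof (rule AE_mp, intro AE_I2 impI)
    fix x assume x: "x \<in> space M"
      and h: "\<forall>a b. emeasure M (D B a b) > 0 \<longrightarrow> (\<exists>k. TP (k+a) x \<in> B \<and> TP (k+b) x \<in> B)"
    have "\<exists>a\<in>F. \<exists>k. bnd (real K) (TP (k+t) x) \<and> bnd (real K) (TP (k+a) x)" for t
    proof -
      obtain a where a: "a \<in> F" "emeasure M (D B t a) > 0" using F(2) by blast
      then obtain k where "TP (k+t) x \<in> B" "TP (k+a) x \<in> B" using h by blast
      then show ?thesis using a unfolding B_def by blast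
    qed
    then show "\<exists>C. \<forall>u. \<bar>P x u\<bar> \<le> C" by (rule P_bounded[OF x F(1)])
  qed
qed

definition gs :: "'a \<Rightarrow> ereal" where "gs x = (SUP t. ereal (P x t))"
definition gn :: "'a \<Rightarrow> ereal" where "gn x = (SUP t. ereal (- P x t))"

lemma gs_meas[measurable]: "gs \<in> borel_measurable M"
  unfolding gs_def by (rule borel_measurable_SUP) auto
lemma gn_meas[measurable]: "gn \<in> borel_measurable M"
  unfolding gn_def by (rule borel_measurable_SUP) auto

lemma gs_nonneg: "0 \<le> gs x" unfolding gs_def by (rule SUP_upper2[of 0]) auto
lemma gn_nonneg: "0 \<le> gn x" unfolding gn_def by (rule SUP_upper2[of 0]) auto

lemma SUP_shift1: "(SUP t::int. h (t+1)) = (SUP t. h t :: ereal)"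
proof -
  have "range (\<lambda>t::int. h (t+1)) = range h"
  proof (intro equalityI subsetI)
    fix y assume "y \<in> range h"
    then obtain t where "y = h t" by blast
    then have "y = h ((t-1)+1)" by simp
    then show "y \<in> range (\<lambda>t::int. h (t+1))" by blast
  qed auto
  then show ?thesis by simp
qed

lemma P_T: assumes x: "x \<in> space M" shows "P (T x) t = P x (t+1) - f x"
proof -
  have "TP 1 x = T x" using TP_succ[OF x, of 0] by simp
  then show ?thesis using P_shift[OF x, of 1 t] P_1[of x] by simp
qed

lemma gs_T: assumes x: "x \<in> space M" shows "gs (T x) = gs x + ereal (- f x)"
proof -
  have "gs (T x) = (SUP t. ereal (P x (t+1)) + ereal (- f x))"
    unfolding gs_def using P_T[OF x] by simp
  also have "\<dots> = (SUP t. ereal (P x (t+1))) + ereal (- f x)"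
    by (rule SUP_ereal_add_left) auto
  also have "(SUP t. ereal (P x (t+1))) = gs x"
    unfolding gs_def by (rule SUP_shift1)
  finally show ?thesis .
qed

lemma gn_T: assumes x: "x \<in> space M" shows "gn (T x) = gn x + ereal (f x)"
proof -
  have "gn (T x) = (SUP t. ereal (- P x (t+1)) + ereal (f x))"
    unfolding gn_def using P_T[OF x] by simp
  also have "\<dots> = (SUP t. ereal (- P x (t+1))) + ereal (f x)"
    by (rule SUP_ereal_add_left) auto
  also have "(SUP t. ereal (- P x (t+1))) = gn x"
    unfolding gn_def by (rule SUP_shift1[where h="\<lambda>t. ereal (- P x t)"])
  finally show ?thesis .
qed

definition G :: "real \<Rightarrow> 'a set" where
  "G c = {x\<in>space M. gs x \<noteq> \<infinity> \<and> gn x \<noteq> \<infinity> \<and> real_of_ereal (gs x) + real_of_ereal (gn x) \<le> c}"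

lemma G_sets[measurable]: "G c \<in> sets M" unfolding G_def by measurable

lemma fin_T:
  assumes x: "x \<in> space M"
  shows "(gs (T x) \<noteq> \<infinity>) = (gs x \<noteq> \<infinity>)" "(gn (T x) \<noteq> \<infinity>) = (gn x \<noteq> \<infinity>)"
    and "gs x \<noteq> \<infinity> \<Longrightarrow> real_of_ereal (gs (T x)) = real_of_ereal (gs x) - f x"
    and "gn x \<noteq> \<infinity> \<Longrightarrow> real_of_ereal (gn (T x)) = real_of_ereal (gn x) + f x"
proof -
  obtain r where r: "gs x = ereal r \<or> gs x = \<infinity>" using gs_nonneg[of x] by (cases "gs x") auto
  obtain q where q: "gn x = ereal q \<or> gn x = \<infinity>" using gn_nonneg[of x] by (cases "gn x") auto
  show "(gs (T x) \<noteq> \<infinity>) = (gs x \<noteq> \<infinity>)" using r gs_T[OF x] by auto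
  show "(gn (T x) \<noteq> \<infinity>) = (gn x \<noteq> \<infinity>)" using q gn_T[OF x] by auto
  show "gs x \<noteq> \<infinity> \<Longrightarrow> real_of_ereal (gs (T x)) = real_of_ereal (gs x) - f x" using r gs_T[OF x] by auto
  show "gn x \<noteq> \<infinity> \<Longrightarrow> real_of_ereal (gn (T x)) = real_of_ereal (gn x) + f x" using q gn_T[OF x] by auto
qed

lemma G_inv: "T -` G c \<inter> space M = G c"
proof (intro set_eqI iffI)
  fix x assume "x \<in> T -` G c \<inter> space M"
  then have x: "x \<in> space M" "T x \<in> G c" by auto
  then show "x \<in> G c" using fin_T[OF x(1)] unfolding G_def by auto
next
  fix x assume "x \<in> G c"
  then have x: "x \<in> space M" "x \<in> G c" unfolding G_def by auto
  then show "x \<in> T -` G c \<inter> space M" using fin_T[OF x(1)] T_in[OF x(1)] unfolding G_def by auto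
qed

end


context ergf
begin

lemma main:
  assumes A[measurable]: "A \<in> sets M" and pos: "emeasure M A > 0"
    and ae: "AE x in M. x \<in> A \<longrightarrow> bdd_above (range (\<lambda>n::nat. \<bar>\<Sum>i\<in>{- int n..int n}. f (TP i x)\<bar>))"
  shows "\<exists>g. g \<in> borel_measurable M \<and> (\<exists>C. \<forall>x\<in>space M. \<bar>g x\<bar> \<le> C) \<and>
             (AE x in M. f x = g x - g (T x))"
proof -
  have ae1: "AE x in M. \<exists>c::nat. x \<in> G (real c)"
    using P_bounded_AE[OF A pos ae]
  proof (rule AE_mp, intro AE_I2 impI)
    fix x assume x: "x \<in> space M" and "\<exists>C. \<forall>u. \<bar>P x u\<bar> \<le> C"
    then obtain C where C: "\<And>u. \<bar>P x u\<bar> \<le> C" by blast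
    have "gs x \<le> ereal C" unfolding gs_def
      by (rule SUP_least) (use C in \<open>auto simp: abs_le_iff\<close>)
    then obtain r where r: "gs x = ereal r" "r \<le> C" using gs_nonneg[of x] by (cases "gs x") auto
    have "gn x \<le> ereal C" unfolding gn_def
      by (rule SUP_least) (use C in \<open>auto simp: abs_le_iff\<close>)
    then obtain q where q: "gn x = ereal q" "q \<le> C" using gn_nonneg[of x] by (cases "gn x") auto
    have "r + q \<le> real (nat \<lceil>2*C\<rceil>)" using r q by linarith
    then have "x \<in> G (real (nat \<lceil>2*C\<rceil>))" unfolding G_def using x r q by simp
    then show "\<exists>c::nat. x \<in> G (real c)" by blast
  qed
  obtain c :: nat where cpos: "emeasure M (G (real c)) > 0"
  proof (rule ccontr)
    assume "\<not> thesis"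
    then have z: "emeasure M (G (real c)) = 0" for c :: nat
      using that by (metis zero_less_iff_neq_zero)
    have "AE x in M. x \<notin> G (real c)" for c :: nat
      by (rule AE_not_in) (rule null_setsI[OF z G_sets])
    then have "AE x in M. \<forall>c::nat. x \<notin> G (real c)"
      by (subst AE_all_countable) blast
    with ae1 have "AE x in M. False" by (rule AE_mp[OF _ AE_mp]) (auto intro: AE_I2)
    then show False by simp
  qed
  have aeG: "AE x in M. x \<in> G (real c)" by (rule inv_full[OF G_sets G_inv cpos])
  define g where "g x = (if x \<in> G (real c) then (real_of_ereal (gs x) - real_of_ereal (gn x)) / 2 else 0)" for x
  have gm: "g \<in> borel_measurable M" unfolding g_def by measurable
  have gb: "\<forall>x\<in>space M. \<bar>g x\<bar> \<le> real c"
  proof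
    fix x assume x: "x \<in> space M"
    show "\<bar>g x\<bar> \<le> real c"
    proof (cases "x \<in> G (real c)")
      case True
      have "0 \<le> real_of_ereal (gs x)" "0 \<le> real_of_ereal (gn x)"
        using gs_nonneg[of x] gn_nonneg[of x] by (simp_all add: real_of_ereal_pos)
      moreover have "real_of_ereal (gs x) + real_of_ereal (gn x) \<le> real c" using True unfolding G_def by simp
      ultimately show ?thesis using True unfolding g_def by (simp add: abs_le_iff)
    next
      case False then show ?thesis unfolding g_def by simp
    qed
  qed
  have "AE x in M. f x = g x - g (T x)"
    using aeG
  proof (rule AE_mp, intro AE_I2 impI)
    fix x assume x: "x \<in> space M" and xG: "x \<in> G (real c)"
    have TG: "T x \<in> G (real c)" using G_inv[of "real c"] xG x by blast
    have fs: "gs x \<noteq> \<infinity>" "gn x \<noteq> \<infinity>" using xG unfolding G_def by auto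
    show "f x = g x - g (T x)"
      unfolding g_def using xG TG fin_T(3)[OF x fs(1)] fin_T(4)[OF x fs(2)] by (simp add: field_simps)
  qed
  then show ?thesis using gm gb by blast
qed

end

theorem proposition4:
  fixes M :: "'a measure" and T :: "'a \<Rightarrow> 'a" and f :: "'a \<Rightarrow> real"
  assumes "prob_space M"
    and "invertible_bimeasurable M T"
    and "measure_preserving M T"
    and "ergodic M T"
    and "f \<in> borel_measurable M"
    and "\<exists>A\<in>sets M. emeasure M A > 0 \<and>
           (AE x in M. x \<in> A \<longrightarrow>
              bdd_above (range (\<lambda>n::nat. \<bar>\<Sum>i\<in>{- int n..int n}. f (Tpow M T i x)\<bar>)))"
  shows "\<exists>g. g \<in> borel_measurable M \<and> (\<exists>C. \<forall>x\<in>space M. \<bar>g x\<bar> \<le> C) \<and>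
             (AE x in M. f x = g x - g (T x))"
proof -
  interpret ergf M T f
    using assms(1-5) by (simp add: ergf_def erg_def erg_axioms_def ergf_axioms_def)
  obtain A where "A \<in> sets M" "emeasure M A > 0"
    "AE x in M. x \<in> A \<longrightarrow> bdd_above (range (\<lambda>n::nat. \<bar>\<Sum>i\<in>{- int n..int n}. f (Tpow M T i x)\<bar>))"
    using assms(6) by blast
  then show ?thesis by (rule main)
qed


end
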